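(* There exists a homeomorphism $T\colon\mathscr C\to\mathscr C$ of the Cantor set $\mathscr C$ which is almost totally minimal: $T$ has exactly one fixed point $x^0\in\mathscr C$, and for every $x\in\mathscr C\setminus\{x^0\}$ and every $m\in\mathbb N$, the set $\{T^{mk}(x):k\in\mathbb Z\}$ is dense in $\mathscr C$. *)

theory Defs
  imports "HOL-Analysis.Analysis"
begin

definition cantor_set :: "real set" where
  "cantor_set = {x. \<exists>d::nat \<Rightarrow> nat. (\<forall>n. d n \<in> {0, 2}) \<and>
                      x = (\<Sum>n. real (d n) / 3 ^ Suc n)}"

definition int_iter :: "('a \<Rightarrow> 'a) \<Rightarrow> ('a \<Rightarrow> 'a) \<Rightarrow> int \<Rightarrow> 'a \<Rightarrow> 'a" where
  "int_iter T S k = (if k \<ge> 0 then T ^^ nat k else S ^^ nat (- k))"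

end

theory Submission
  imports Defs
begin

definition ff :: "nat \<Rightarrow> nat" where "ff n = fact (n+2)"

lemma ff_ge: "ff n \<ge> n + 2"
  unfolding ff_def by (rule fact_ge_self)

lemma ff_dvd: "1 \<le> m \<Longrightarrow> m \<le> n + 2 \<Longrightarrow> m dvd ff n"
  unfolding ff_def by (rule dvd_fact)

primrec bh :: "nat \<Rightarrow> nat" where
  "bh 0 = 1"
| "bh (Suc n) = ff n * bh n + 1 + bh n"

declare bh.simps(2)[simp del]

definition aa :: "nat \<Rightarrow> nat" where "aa n = ff n * bh n + 1"
definition sp :: "nat \<Rightarrow> nat" where "sp n = aa n - bh n"

primrec B :: "nat \<Rightarrow> bool list" where
  "B 0 = [True]"
| "B (Suc n) = B n @ replicate (sp n) False @ B n"

lemma bh_pos: "bh n \<ge> 1"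
  by (induction n) (auto simp: bh.simps(2))

lemma aa_ge: "aa n \<ge> bh n + n + 2"
proof -
  have "ff n \<ge> n+2" by (rule ff_ge)
  then have a: "ff n * bh n \<ge> (n+2) * bh n" by (rule mult_le_mono1)
  have b1: "bh n \<ge> 1" by (rule bh_pos)
  have "n * bh n \<ge> n" using b1 by simp
  moreover have "(n+2) * bh n = n * bh n + 2 * bh n" by (simp add: algebra_simps)
  ultimately have "(n+2) * bh n \<ge> bh n + n + 1" using b1 by linarith
  then show ?thesis using a unfolding aa_def by linarith
qed

lemma sp_ge: "sp n \<ge> n + 2"
  using aa_ge[of n] unfolding sp_def by linarith

lemma bh_Suc: "bh (Suc n) = aa n + bh n"
  by (simp add: aa_def bh.simps(2))

lemma aa_eq: "aa n = bh n + sp n"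
  using aa_ge[of n] unfolding sp_def by linarith

lemma length_B [simp]: "length (B n) = bh n"
  by (induction n) (auto simp: aa_eq bh_Suc)

lemma B_Suc_nth:
  assumes "i < bh (Suc n)"
  shows "B (Suc n) ! i = (if i < bh n then B n ! i else if i < aa n then False else B n ! (i - aa n))"
  using assms by (auto simp: nth_append aa_eq bh_Suc)

declare B.simps(2)[simp del]

lemma bh_mono_lt: "n < m \<Longrightarrow> bh n < bh m"
proof (induction m)
  case 0 then show ?case by simp
next
  case (Suc m)
  have "bh m < bh (Suc m)" using aa_ge[of m] by (simp add: bh_Suc)
  then show ?case using Suc by (cases "n = m") auto
qed

lemma bh_ge: "bh n \<ge> n + 1"
proof (induction n)
  case 0 then show ?case by simp
next
  case (Suc n) then show ?case using bh_mono_lt[of n "Suc n"] by simp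
qed

lemma bh_le_imp: "bh m \<le> bh n \<Longrightarrow> m \<le> n"
  using bh_mono_lt by (meson leD leI)

definition occ :: "nat \<Rightarrow> nat \<Rightarrow> nat \<Rightarrow> bool" where
  "occ N n c \<longleftrightarrow> c + bh N \<le> bh n \<and> (\<forall>j<bh N. B n ! (c+j) = B N ! j)"

lemma occ_refl: "occ N N 0" by (simp add: occ_def)

lemma occ_first: "occ N n c \<Longrightarrow> occ N (Suc n) c"
proof -
  assume o: "occ N n c"
  show ?thesis unfolding occ_def
  proof (intro conjI allI impI)
    show "c + bh N \<le> bh (Suc n)" using o by (simp add: occ_def bh_Suc)
    fix j assume j: "j < bh N"
    have "c + j < bh n" using o j by (simp add: occ_def)
    then have "B (Suc n) ! (c + j) = B n ! (c + j)" using B_Suc_nth[of "c + j" n] by (simp add: bh_Suc)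
    then show "B (Suc n) ! (c + j) = B N ! j" using o j by (simp add: occ_def)
  qed
qed

lemma occ_second: "occ N n c \<Longrightarrow> occ N (Suc n) (c + aa n)"
proof -
  assume o: "occ N n c"
  show ?thesis unfolding occ_def
  proof (intro conjI allI impI)
    show "c + aa n + bh N \<le> bh (Suc n)" using o by (simp add: occ_def bh_Suc)
    fix j assume j: "j < bh N"
    have "c + aa n + j < bh (Suc n)" using o j by (simp add: occ_def bh_Suc)
    then have "B (Suc n) ! (c + aa n + j) = B n ! (c + j)"
      using B_Suc_nth[of "c + aa n + j" n] aa_ge[of n] by simp
    then show "B (Suc n) ! (c + aa n + j) = B N ! j" using o j by (simp add: occ_def)
  qed
qed

lemma occ_lift: "N \<le> n \<Longrightarrow> occ N n 0"
proof (induction n rule: dec_induct)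
  case base then show ?case by (rule occ_refl)
next
  case (step n) then show ?case using occ_first by blast
qed

lemma occ_trans: "occ n N' c1 \<Longrightarrow> occ N n c2 \<Longrightarrow> occ N N' (c1 + c2)"
proof -
  assume o1: "occ n N' c1" and o2: "occ N n c2"
  show ?thesis unfolding occ_def
  proof (intro conjI allI impI)
    show "c1 + c2 + bh N \<le> bh N'" using o1 o2 by (simp add: occ_def)
    fix j assume j: "j < bh N"
    have "c2 + j < bh n" using o2 j by (simp add: occ_def)
    then have "B N' ! (c1 + (c2 + j)) = B n ! (c2 + j)" using o1 by (simp add: occ_def)
    then show "B N' ! (c1 + c2 + j) = B N ! j" using o2 j by (simp add: occ_def add.assoc)
  qed
qed

lemma true_in_occ:
  assumes "N \<le> n" "i < bh n" "B n ! i"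
  shows "\<exists>c. occ N n c \<and> c \<le> i \<and> i < c + bh N"
  using assms
proof (induction n arbitrary: i rule: dec_induct)
  case base
  then show ?case using occ_refl by auto
next
  case (step n)
  show ?case
  proof (cases "i < bh n")
    case True
    then have "B n ! i" using step B_Suc_nth by simp
    then show ?thesis using step True occ_first by blast
  next
    case False
    then have ge: "i \<ge> aa n" and b: "B n ! (i - aa n)"
      using step.prems B_Suc_nth[of i n] by (auto split: if_splits)
    have "i - aa n < bh n" using step.prems ge by (simp add: bh_Suc)
    then obtain c where "occ N n c" "c \<le> i - aa n" "i - aa n < c + bh N"
      using step.IH b by blast
    then show ?thesis using occ_second ge by (intro exI[of _ "c + aa n"]) auto
  qed
qed

definition wok :: "(int \<Rightarrow> bool) \<Rightarrow> int \<Rightarrow> nat \<Rightarrow> bool" where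
  "wok x a L \<longleftrightarrow> (\<exists>n q. q + L \<le> bh n \<and> (\<forall>j<L. x (a + int j) = B n ! (q + j)))"

definition XX :: "(int \<Rightarrow> bool) set" where "XX = {x. \<forall>a L. wok x a L}"

lemma zero_in: "(\<lambda>_. False) \<in> XX"
  unfolding XX_def wok_def
proof (intro CollectI allI)
  fix a :: int and L :: nat
  have "bh L + L \<le> bh (Suc L)" using aa_ge[of L] by (simp add: bh_Suc)
  moreover have "\<forall>j<L. False = B (Suc L) ! (bh L + j)"
  proof (intro allI impI)
    fix j assume "j < L"
    then show "False = B (Suc L) ! (bh L + j)"
      using B_Suc_nth[of "bh L + j" L] aa_ge[of L] by (simp add: bh_Suc)
  qed
  ultimately show "\<exists>n q. q + L \<le> bh n \<and> (\<forall>j<L. False = B n ! (q + j))" by blast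
qed

lemma shift_in: "x \<in> XX \<Longrightarrow> (\<lambda>i. x (i + t)) \<in> XX"
  unfolding XX_def wok_def
proof (intro CollectI allI)
  fix a L assume "x \<in> {x. \<forall>a L. \<exists>n q. q + L \<le> bh n \<and> (\<forall>j<L. x (a + int j) = B n ! (q + j))}"
  then obtain n q where "q + L \<le> bh n" "\<forall>j<L. x (a + t + int j) = B n ! (q + j)" by blast
  then show "\<exists>n q. q + L \<le> bh n \<and> (\<forall>j<L. x (a + int j + t) = B n ! (q + j))"
    by (intro exI[of _ n] exI[of _ q]) (simp add: ac_simps)
qed

lemma no_adj: "i + 1 < bh n \<Longrightarrow> \<not> (B n ! i \<and> B n ! (i+1))"
proof (induction n arbitrary: i)
  case 0 then show ?case by simp
next
  case (Suc n)
  have A: "aa n \<ge> bh n + n + 2" by (rule aa_ge)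
  have i1: "i + 1 < aa n + bh n" using Suc.prems by (simp add: bh_Suc)
  show ?case
  proof (cases "i + 1 < bh n")
    case True then show ?thesis using Suc.IH[of i] B_Suc_nth[of i n] B_Suc_nth[of "i+1" n] Suc.prems by auto
  next
    case False
    show ?thesis
    proof (cases "i < aa n")
      case True
      then show ?thesis using False B_Suc_nth[of i n] B_Suc_nth[of "i+1" n] Suc.prems A by auto
    next
      case F2: False
      have "i - aa n + 1 < bh n" using i1 F2 by linarith
      then have "\<not> (B n ! (i - aa n) \<and> B n ! (i - aa n + 1))" by (rule Suc.IH)
      moreover have "i + 1 - aa n = i - aa n + 1" using F2 by simp
      ultimately show ?thesis using F2 B_Suc_nth[of i n] B_Suc_nth[of "i+1" n] Suc.prems A by auto
    qed
  qed
qed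

lemma true_not_in: "(\<lambda>_. True) \<notin> XX"
proof
  assume "(\<lambda>_. True) \<in> XX"
  then have "wok (\<lambda>_. True) 0 2" by (simp add: XX_def)
  then obtain n q where "q + 2 \<le> bh n" "\<forall>j<2. True = B n ! (q + j)" unfolding wok_def by blast
  then have "B n ! (q + 0)" "B n ! (q + 1)" "q + 1 < bh n" by (auto dest: spec[of _ 0] spec[of _ 1])
  then show False using no_adj[of q n] by simp
qed

lemma contains:
  assumes "x \<in> XX" "x p"
  shows "\<exists>P. \<forall>j<bh N. x (P + int j) = B N ! j"
proof -
  have "wok x (p - int (bh N)) (2 * bh N + 1)" using assms by (simp add: XX_def)
  then obtain n q where nq: "q + (2 * bh N + 1) \<le> bh n"
    "\<forall>j<2 * bh N + 1. x (p - int (bh N) + int j) = B n ! (q + j)"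
    unfolding wok_def by blast
  have "B n ! (q + bh N)" using nq(2)[rule_format, of "bh N"] assms(2) by simp
  moreover have "N \<le> n" using nq(1) bh_le_imp[of N n] by simp
  moreover have "q + bh N < bh n" using nq(1) by simp
  ultimately obtain c where c: "occ N n c" "c \<le> q + bh N" "q + bh N < c + bh N"
    using true_in_occ by blast
  show ?thesis
  proof (intro exI[of _ "p - int (bh N) + int (c - q)"] allI impI)
    fix j assume j: "j < bh N"
    have "c - q + j < 2 * bh N + 1" using c j by linarith
    then have "x (p - int (bh N) + int (c - q + j)) = B n ! (q + (c - q + j))" using nq(2) by blast
    moreover have "q + (c - q + j) = c + j" using c by linarith
    moreover have "B n ! (c + j) = B N ! j" using c(1) j by (simp add: occ_def)
    moreover have "p - int (bh N) + int (c - q) + int j = p - int (bh N) + int (c - q + j)" by simp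
    ultimately show "x (p - int (bh N) + int (c - q) + int j) = B N ! j" by (simp only:)
  qed
qed

lemma residue:
  assumes "1 \<le> m" "m \<le> N + 2"
  shows "r \<le> t \<Longrightarrow> \<exists>c. occ N (N+t) c \<and> c mod m = r mod m"
proof (induction t arbitrary: r)
  case 0 then show ?case using occ_refl[of N] by (intro exI[of _ 0]) simp
next
  case (Suc t)
  show ?case
  proof (cases "r \<le> t")
    case True
    then obtain c where "occ N (N+t) c" "c mod m = r mod m" using Suc.IH by blast
    then show ?thesis using occ_first by auto
  next
    case False
    then have r: "r = Suc t" using Suc.prems by simp
    obtain c where c: "occ N (N+t) c" "c mod m = t mod m" using Suc.IH[of t] by blast
    have "m dvd ff (N+t)" using assms by (intro ff_dvd) auto
    then have "m dvd ff (N+t) * bh (N+t)" by simp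
    then obtain w where w: "ff (N+t) * bh (N+t) = m * w" by (auto elim: dvdE)
    then have "c + aa (N+t) = (c + 1) + m * w" by (simp add: aa_def)
    then have "(c + aa (N+t)) mod m = (c + 1) mod m" by simp
    also have "\<dots> = Suc (c mod m) mod m" by (simp add: mod_Suc_eq)
    also have "\<dots> = Suc t mod m" using c(2) by (simp add: mod_Suc_eq)
    finally show ?thesis using r occ_second[OF c(1)] by auto
  qed
qed

lemma density:
  assumes x: "x \<in> XX" "x \<noteq> (\<lambda>_. False)" and z: "z \<in> XX" and m: "1 \<le> m"
  shows "\<exists>k. \<forall>i. \<bar>i\<bar> \<le> int M \<longrightarrow> x (i + int m * k) = z i"
proof -
  obtain p where p: "x p" using x(2) by auto
  have "wok z (- int M) (2*M+1)" using z by (simp add: XX_def)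
  then obtain n q where nq: "q + (2*M+1) \<le> bh n"
      "\<forall>j<2*M+1. z (- int M + int j) = B n ! (q + j)" unfolding wok_def by blast
  define n1 where "n1 = max n m"
  have o1: "occ n n1 0" using occ_lift n1_def by simp
  obtain P where P: "\<forall>j<bh (n1+m). x (P + int j) = B (n1+m) ! j"
    using contains[OF x(1) p] by blast
  define Y where "Y = P + int q + int M"
  define r where "r = nat ((- Y) mod int m)"
  have rr: "int r = (- Y) mod int m" unfolding r_def using m by simp
  have "(- Y) mod int m < int m" using m by simp
  then have "int r < int m" using rr by simp
  then have rlt: "r < m" by simp
  obtain c where c: "occ n1 (n1+m) c" "c mod m = r mod m"
    using residue[of m n1 r m] rlt m n1_def by force
  have cr: "int c mod int m = (- Y) mod int m" using rlt c(2) rr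
    by (metis mod_less of_nat_mod)
  have o2: "occ n (n1+m) c" using occ_trans[OF c(1) o1] by simp
  have "int m dvd (int c - (- Y))" using cr by (simp add: mod_eq_dvd_iff)
  then obtain k where k: "int c + Y = int m * k" by (auto elim: dvdE)
  show ?thesis
  proof (intro exI[of _ k] allI impI)
    fix i assume i: "\<bar>i\<bar> \<le> int M"
    define j where "j = nat (i + int M)"
    have j: "j < 2*M+1" "int j = i + int M" using i j_def by auto
    have zi: "z i = B n ! (q + j)" using nq(2)[rule_format, OF j(1)] j(2) by simp
    have "q + j < bh n" using nq(1) j(1) by simp
    then have "c + (q + j) < bh (n1+m)" and "B (n1+m) ! (c + (q+j)) = B n ! (q+j)"
      using o2 unfolding occ_def by auto
    then have "x (P + int (c + (q+j))) = B n ! (q+j)" using P by auto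
    moreover have "P + int (c + (q + j)) = i + int m * k" using k j(2) unfolding Y_def by simp
    ultimately show "x (i + int m * k) = z i" using zi by simp
  qed
qed

lemma per_all:
  fixes x :: "int \<Rightarrow> 'a" and t i k :: int
  assumes "\<forall>i. x (i + t) = x i"
  shows "x (i + k * t) = x i"
proof (induction k rule: int_induct[of _ 0])
  case base then show ?case by simp
next
  case (step1 k)
  have "x (i + (k + 1) * t) = x ((i + k * t) + t)" by (simp add: algebra_simps)
  then show ?case using assms step1 by simp
next
  case (step2 k)
  have "x (i + k * t) = x ((i + (k - 1) * t) + t)" by (simp add: algebra_simps)
  then show ?case using assms step2 by simp
qed

lemma nonper:
  assumes "x \<in> XX" "x \<noteq> (\<lambda>_. False)" "t \<noteq> 0"
  shows "\<exists>i. x (i + t) \<noteq> x i"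
proof (rule ccontr)
  assume "\<not> ?thesis"
  then have per: "\<forall>i. x (i+t) = x i" by auto
  obtain p where p: "x p" using assms(2) by auto
  define N where "N = nat \<bar>t\<bar>"
  have tN: "\<bar>t\<bar> = int N" "N > 0" using assms(3) N_def by auto
  obtain P where P: "\<forall>j<bh (Suc N). x (P + int j) = B (Suc N) ! j"
    using contains[OF assms(1) p] by blast
  have zero: "\<not> x (P + int (bh N) + int j)" if "j < N" for j
  proof -
    have "bh N + j < aa N" using aa_ge[of N] that by linarith
    then have "bh N + j < bh (Suc N)" "\<not> B (Suc N) ! (bh N + j)"
      using B_Suc_nth[of "bh N + j" N] by (auto simp: bh_Suc)
    moreover have "x (P + int (bh N + j)) = B (Suc N) ! (bh N + j)" using P calculation by blast
    ultimately show ?thesis by (simp add: add.assoc)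
  qed
  define b where "b = P + int (bh N)"
  define r where "r = (p - b) mod int N"
  define k where "k = (p - b) div int N"
  have r: "0 \<le> r" "r < int N" using tN unfolding r_def by auto
  have pe: "p = b + r + k * int N" unfolding r_def k_def by (simp add: algebra_simps)
  have per2: "\<forall>i. x (i + int N) = x i"
  proof (cases "t > 0")
    case True then show ?thesis using per tN by simp
  next
    case False
    then have tn: "int N = -t" using tN by simp
    show ?thesis
    proof
      fix i
      have "x (i + int N + t) = x (i + int N)" using per by blast
      moreover have "i + int N + t = i" using tn by simp
      ultimately show "x (i + int N) = x i" by simp
    qed
  qed
  have "x p = x (b + r)" using per_all[OF per2, of "b + r" k] pe by simp
  moreover have "\<not> x (b + r)" using zero[of "nat r"] r unfolding b_def by simp
  ultimately show False using p by simp
qed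

definition om :: "int \<Rightarrow> bool" where "om i = (if i < 0 then False else B (nat i) ! nat i)"

lemma B_prefix: "n \<le> m \<Longrightarrow> i < bh n \<Longrightarrow> B m ! i = B n ! i"
proof (induction m rule: dec_induct)
  case base then show ?case by simp
next
  case (step m)
  have "bh n \<le> bh m" using step(1) bh_mono_lt[of n m] by (cases "n = m") auto
  then show ?case using step B_Suc_nth[of i m] by (simp add: bh_Suc)
qed

lemma om_in: "om \<in> XX"
  unfolding XX_def
proof (intro CollectI allI)
  fix a :: int and L :: nat
  define n where "n = nat \<bar>a\<bar> + L"
  have bhn: "bh n \<ge> n + 1" by (rule bh_ge)
  have aan: "aa n \<ge> bh n + n + 2" by (rule aa_ge)
  define q where "q = nat (int (aa n) + a)"
  have na: "int (nat \<bar>a\<bar>) = \<bar>a\<bar>" by simp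
  have "int (aa n) \<ge> int n + 2" using aan by linarith
  then have "int (aa n) + a \<ge> 0" using na n_def by linarith
  then have q: "int q = int (aa n) + a" unfolding q_def by simp
  show "wok om a L" unfolding wok_def
  proof (intro exI conjI allI impI)
    have "int q + int L \<le> int (aa n) + int (bh n)" using q bhn n_def na abs_ge_self[of a] by linarith
    then show "q + L \<le> bh (Suc n)" by (simp add: bh_Suc)
    fix j assume j: "j < L"
    show "om (a + int j) = B (Suc n) ! (q + j)"
    proof (cases "a + int j < 0")
      case True
      have "q + j \<ge> bh n" "q + j < aa n" using q True aan n_def by linarith+
      then have "B (Suc n) ! (q + j) = False" using B_Suc_nth[of "q+j" n] by (simp add: bh_Suc)
      then show ?thesis using True by (simp add: om_def)
    next
      case nn: False
      define t where "t = nat (a + int j)"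
      have t: "int t = a + int j" "t \<le> n" using nn t_def n_def j by auto
      have qj: "q + j = aa n + t" using q t by linarith
      have tb: "t < bh n" using t bhn by linarith
      have "B (Suc n) ! (q + j) = B n ! t"
        using B_Suc_nth[of "q+j" n] qj tb aan by (simp add: bh_Suc)
      also have "\<dots> = B t ! t" using B_prefix[of t n t] t(2) bh_ge[of t] by simp
      moreover have "om (a + int j) = B t ! t" using nn unfolding om_def t_def by simp
      ultimately show ?thesis by simp
    qed
  qed
qed

lemma om0: "om 0" by (simp add: om_def)

lemma om_nz: "om \<noteq> (\<lambda>_. False)"
proof
  assume "om = (\<lambda>_. False)"
  then have "om 0 = False" by (rule fun_cong)
  then show False using om0 by simp
qed

lemma perfect:
  assumes "x \<in> XX"
  shows "\<exists>y\<in>XX. y \<noteq> x \<and> (\<forall>i. \<bar>i\<bar> \<le> int M \<longrightarrow> y i = x i)"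
proof (cases "x = (\<lambda>_. False)")
  case True
  obtain k where k: "\<forall>i. \<bar>i\<bar> \<le> int M \<longrightarrow> om (i + int 1 * k) = x i"
    using density[OF om_in om_nz assms, of 1 M] by auto
  have "(\<lambda>i. om (i + k)) \<in> XX" using shift_in[OF om_in] by simp
  moreover have "(\<lambda>i. om (i + k)) \<noteq> x"
  proof
    assume "(\<lambda>i. om (i + k)) = x"
    then have "(\<lambda>i. om (i + k)) (- k) = x (- k)" by (rule fun_cong)
    then have "om (- k + k) = x (- k)" by simp
    then show False using True by (simp add: om_def)
  qed
  ultimately show ?thesis using k by auto
next
  case False
  obtain k where k: "\<forall>i. \<bar>i\<bar> \<le> int (M+1) \<longrightarrow> x (i + int 2 * k) = x (i + 1)"
    using density[OF assms False shift_in[OF assms, of 1], of 2 "M+1"] by auto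
  define y where "y = (\<lambda>i. x (i + (2*k - 1)))"
  have "y \<in> XX" unfolding y_def by (rule shift_in[OF assms])
  moreover have "y \<noteq> x"
  proof
    assume "y = x"
    then have "\<forall>i. y i = x i" by simp
    then have "\<forall>i. x (i + (2*k-1)) = x i" unfolding y_def by simp
    moreover have "2*k - 1 \<noteq> 0" by presburger
    ultimately show False using nonper[OF assms False] by blast
  qed
  moreover have "\<forall>i. \<bar>i\<bar> \<le> int M \<longrightarrow> y i = x i"
  proof (intro allI impI)
    fix i :: int assume "\<bar>i\<bar> \<le> int M"
    then have "\<bar>i - 1\<bar> \<le> int (M+1)" by simp
    then have "x (i - 1 + int 2 * k) = x (i - 1 + 1)" using k by blast
    then show "y i = x i" unfolding y_def by (simp add: algebra_simps)
  qed
  ultimately show ?thesis by blast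
qed

lemma fixed:
  assumes "x \<in> XX" "\<forall>i. x (i+1) = x i"
  shows "x = (\<lambda>_. False)"
proof -
  have c: "x i = x 0" for i using per_all[of x 1 0 i] assms(2) by simp
  show ?thesis
  proof (cases "x 0")
    case True
    then have "x = (\<lambda>_. True)" using c by auto
    then show ?thesis using assms(1) true_not_in by simp
  next
    case False then show ?thesis using c by auto
  qed
qed

definition dg :: "bool \<Rightarrow> real" where "dg b = (if b then 2 else 0)"
definition cd :: "(nat \<Rightarrow> bool) \<Rightarrow> real" where "cd d = (\<Sum>n. dg (d n) / 3 ^ Suc n)"
definition agree :: "nat \<Rightarrow> (nat \<Rightarrow> bool) \<Rightarrow> (nat \<Rightarrow> bool) \<Rightarrow> bool" where
  "agree k x y \<longleftrightarrow> (\<forall>i<k. x i = y i)"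

lemma geo_sums: "(\<lambda>n. 2 / 3 ^ Suc (n + N) :: real) sums (1 / 3 ^ N)"
proof -
  have "(\<lambda>n. (2 / 3^Suc N) * (1/3::real)^n) sums ((2 / 3^Suc N) * (1 / (1 - 1/3)))"
    by (intro sums_mult geometric_sums) simp
  moreover have "(\<lambda>n. (2 / 3^Suc N) * (1/3::real)^n) = (\<lambda>n. 2 / 3 ^ Suc (n + N))"
    by (auto simp: power_add power_one_over field_simps)
  moreover have "(2 / 3^Suc N) * (1 / (1 - 1/3)) = (1 / 3 ^ N :: real)"
    by (simp add: field_simps)
  ultimately show ?thesis by simp
qed

lemma bnd_summable: "summable (\<lambda>n. 2 / 3 ^ Suc n :: real)"
  using sums_summable[OF geo_sums[of 0]] by simp

lemma summable_g:
  fixes g :: "nat \<Rightarrow> real"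
  assumes "\<forall>n. \<bar>g n\<bar> \<le> 2 / 3 ^ Suc n"
  shows "summable g"
  by (rule summable_comparison_test[OF _ bnd_summable]) (use assms in auto)

lemma tail_bound:
  fixes g :: "nat \<Rightarrow> real"
  assumes a: "\<forall>n. \<bar>g n\<bar> \<le> 2 / 3 ^ Suc n"
  shows "\<bar>\<Sum>n. g (n + N)\<bar> \<le> 1 / 3 ^ N"
proof -
  have sg: "summable (\<lambda>n. g (n + N))" using summable_g[OF a] by (simp add: summable_iff_shift)
  have sb: "summable (\<lambda>n. 2 / 3 ^ Suc (n + N) :: real)" using geo_sums by (rule sums_summable)
  have sb': "summable (\<lambda>n. - g (n + N))" using sg by (rule summable_minus)
  have "(\<Sum>n. g (n + N)) \<le> (\<Sum>n. 2 / 3 ^ Suc (n + N))"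
    by (rule suminf_le[OF _ sg sb]) (use a abs_le_iff in blast)
  moreover have "(\<Sum>n. - g (n + N)) \<le> (\<Sum>n. 2 / 3 ^ Suc (n + N))"
    by (rule suminf_le[OF _ sb' sb]) (use a abs_le_iff in blast)
  moreover have "(\<Sum>n. - g (n + N)) = - (\<Sum>n. g (n + N))" using sg by (rule suminf_minus)
  moreover have "(\<Sum>n. 2 / 3 ^ Suc (n + N)) = (1 / 3 ^ N :: real)" using geo_sums by (rule sums_unique[symmetric])
  ultimately show ?thesis by linarith
qed

definition gd :: "(nat \<Rightarrow> bool) \<Rightarrow> (nat \<Rightarrow> bool) \<Rightarrow> nat \<Rightarrow> real" where
  "gd d e n = (dg (d n) - dg (e n)) / 3 ^ Suc n"

lemma gd_bound: "\<forall>n. \<bar>gd d e n\<bar> \<le> 2 / 3 ^ Suc n"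
  by (auto simp: gd_def dg_def)

lemma cd_summable: "summable (\<lambda>n. dg (d n) / 3 ^ Suc n)"
  by (rule summable_g) (auto simp: dg_def)

lemma cd_diff: "cd d - cd e = (\<Sum>n. gd d e n)"
proof -
  have "cd d - cd e = (\<Sum>n. dg (d n) / 3 ^ Suc n - dg (e n) / 3 ^ Suc n)"
    unfolding cd_def by (rule suminf_diff[OF cd_summable cd_summable])
  also have "\<dots> = (\<Sum>n. gd d e n)" unfolding gd_def by (simp only: diff_divide_distrib)
  finally show ?thesis .
qed

lemma gd_zero: "agree N d e \<Longrightarrow> (\<Sum>n. gd d e n) = (\<Sum>n. gd d e (n + N))"
proof -
  assume ag: "agree N d e"
  have "(\<Sum>n. gd d e n) = (\<Sum>n. gd d e (n + N)) + (\<Sum>i<N. gd d e i)"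
    by (rule suminf_split_initial_segment[OF summable_g[OF gd_bound]])
  moreover have "(\<Sum>i<N. gd d e i) = 0" using ag by (auto simp: agree_def gd_def)
  ultimately show ?thesis by simp
qed

lemma cd_close: "agree N d e \<Longrightarrow> \<bar>cd d - cd e\<bar> \<le> 1 / 3 ^ N"
proof -
  assume ag: "agree N d e"
  have "cd d - cd e = (\<Sum>n. gd d e (n + N))" using cd_diff gd_zero[OF ag] by simp
  then show ?thesis using tail_bound[OF gd_bound, of d e N] by simp
qed

lemma cd_far:
  assumes "agree n d e" "d n \<noteq> e n"
  shows "\<bar>cd d - cd e\<bar> \<ge> 1 / 3 ^ Suc n"
proof -
  define f where "f = (\<lambda>i. gd d e (i + n))"
  have sf: "summable f" unfolding f_def using summable_g[OF gd_bound] by (simp add: summable_iff_shift)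
  define b where "b = (\<Sum>i. gd d e (i + Suc n))"
  have s1: "(\<Sum>i. f (Suc i)) = suminf f - f 0" by (rule suminf_split_head[OF sf])
  have s2: "(\<Sum>i. f (Suc i)) = b" unfolding f_def b_def by simp
  have tb: "\<bar>b\<bar> \<le> 1 / 3 ^ Suc n" unfolding b_def by (rule tail_bound[OF gd_bound])
  have f0: "\<bar>f 0\<bar> = 2 / 3 ^ Suc n" using assms(2) unfolding f_def gd_def dg_def by auto
  have s3: "cd d - cd e = suminf f" unfolding f_def using cd_diff gd_zero[OF assms(1)] by simp
  have eq: "cd d - cd e = f 0 + b" using s1 s2 s3 by linarith
  have tri: "\<bar>f 0\<bar> \<le> \<bar>f 0 + b\<bar> + \<bar>b\<bar>" using abs_triangle_ineq[of "f 0 + b" "- b"] by simp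
  have e2: "\<bar>cd d - cd e\<bar> = \<bar>f 0 + b\<bar>" using eq by simp
  have h: "2 / 3 ^ Suc n = 2 * (1 / 3 ^ Suc n :: real)" by simp
  show ?thesis using tb tri e2 f0 h by linarith
qed

lemma first_diff: "\<not> agree N d e \<Longrightarrow> \<exists>n<N. agree n d e \<and> d n \<noteq> e n"
proof (induction N)
  case 0 then show ?case by (simp add: agree_def)
next
  case (Suc N)
  show ?case
  proof (cases "agree N d e")
    case True
    then have "d N \<noteq> e N" using Suc.prems by (auto simp: agree_def less_Suc_eq)
    then show ?thesis using True by auto
  next
    case False then show ?thesis using Suc.IH less_SucI by blast
  qed
qed

lemma cd_agree: "\<bar>cd d - cd e\<bar> < 1 / 3 ^ N \<Longrightarrow> agree N d e"
proof (rule ccontr)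
  assume a: "\<bar>cd d - cd e\<bar> < 1 / 3 ^ N" and "\<not> agree N d e"
  then obtain n where n: "n < N" "agree n d e" "d n \<noteq> e n" using first_diff by blast
  have "(3::real) ^ Suc n \<le> 3 ^ N" using n(1) by (intro power_increasing) auto
  then have "1 / 3 ^ N \<le> (1 / 3 ^ Suc n :: real)" by (intro divide_left_mono) auto
  then show False using cd_far[OF n(2,3)] a by linarith
qed

lemma cd_inj: "inj cd"
proof (rule injI)
  fix d e assume eq: "cd d = cd e"
  show "d = e"
  proof (rule ccontr)
    assume "d \<noteq> e"
    then obtain N where "d N \<noteq> e N" by auto
    then have "\<not> agree (Suc N) d e" by (auto simp: agree_def)
    then obtain n where "agree n d e" "d n \<noteq> e n" using first_diff by blast
    then have "\<bar>cd d - cd e\<bar> \<ge> 1 / 3 ^ Suc n" by (rule cd_far)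
    moreover have "\<bar>cd d - cd e\<bar> = 0" using eq by simp
    moreover have "(0::real) < 1 / 3 ^ Suc n" by simp
    ultimately show False by linarith
  qed
qed

lemma cantor_eq: "cantor_set = range cd"
proof
  show "cantor_set \<subseteq> range cd"
  proof
    fix x assume "x \<in> cantor_set"
    then obtain dn :: "nat \<Rightarrow> nat" where dn: "\<forall>n. dn n \<in> {0,2}" "x = (\<Sum>n. real (dn n) / 3 ^ Suc n)"
      unfolding cantor_set_def by blast
    have "real (dn n) = dg (dn n = 2)" for n
    proof -
      have "dn n = 0 \<or> dn n = 2" using dn(1) by auto
      then show ?thesis by (auto simp: dg_def)
    qed
    then have "x = cd (\<lambda>n. dn n = 2)" using dn(2) unfolding cd_def by simp
    then show "x \<in> range cd" by blast
  qed
next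
  show "range cd \<subseteq> cantor_set"
  proof
    fix x assume "x \<in> range cd"
    then obtain d where x: "x = cd d" by blast
    define dn :: "nat \<Rightarrow> nat" where "dn = (\<lambda>n. if d n then 2 else 0)"
    have "\<forall>n. dn n \<in> {0,2}" unfolding dn_def by auto
    moreover have "(\<lambda>n. real (dn n) / 3 ^ Suc n) = (\<lambda>n. dg (d n) / 3 ^ Suc n)"
      by (auto simp: dn_def dg_def)
    then have "x = (\<Sum>n. real (dn n) / 3 ^ Suc n)" unfolding x cd_def by simp
    ultimately show "x \<in> cantor_set" unfolding cantor_set_def by blast
  qed
qed

definition dec :: "real \<Rightarrow> (nat \<Rightarrow> bool)" where "dec = inv cd"

lemma dec_cd [simp]: "dec (cd d) = d"
  unfolding dec_def by (simp add: cd_inj)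

lemma cd_dec: "u \<in> cantor_set \<Longrightarrow> cd (dec u) = u"
  unfolding dec_def cantor_eq by (simp add: f_inv_into_f)

definition ucont :: "((nat \<Rightarrow> bool) \<Rightarrow> (nat \<Rightarrow> bool)) \<Rightarrow> bool" where
  "ucont G \<longleftrightarrow> (\<forall>k. \<exists>l. \<forall>d e. agree l d e \<longrightarrow> agree k (G d) (G e))"

lemma small_pow: "0 < (\<epsilon>::real) \<Longrightarrow> \<exists>k. 1 / 3 ^ k < \<epsilon>"
proof -
  assume "0 < \<epsilon>"
  then obtain k where "(1/3::real) ^ k < \<epsilon>" using real_arch_pow_inv[of \<epsilon> "1/3"] by auto
  then show ?thesis by (auto simp: power_one_over)
qed

lemma cont_conj:
  assumes "ucont G"
  shows "continuous_on cantor_set (\<lambda>u. cd (G (dec u)))"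
  unfolding continuous_on_iff
proof (intro ballI allI impI)
  fix u \<epsilon> assume u: "u \<in> cantor_set" and e: "(0::real) < \<epsilon>"
  obtain k where k: "1 / 3 ^ k < \<epsilon>" using small_pow[OF e] by blast
  obtain l where l: "\<forall>d e. agree l d e \<longrightarrow> agree k (G d) (G e)" using assms unfolding ucont_def by blast
  show "\<exists>\<delta>>0. \<forall>u'\<in>cantor_set. dist u' u < \<delta> \<longrightarrow> dist (cd (G (dec u'))) (cd (G (dec u))) < \<epsilon>"
  proof (intro exI[of _ "1 / 3 ^ l"] conjI ballI impI)
    show "(0::real) < 1 / 3 ^ l" by simp
    fix u' assume u': "u' \<in> cantor_set" "dist u' u < 1 / 3 ^ l"
    then have "\<bar>cd (dec u') - cd (dec u)\<bar> < 1 / 3 ^ l" using u by (simp add: cd_dec dist_real_def)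
    then have "agree l (dec u') (dec u)" by (rule cd_agree)
    then have "agree k (G (dec u')) (G (dec u))" using l by blast
    then have "\<bar>cd (G (dec u')) - cd (G (dec u))\<bar> \<le> 1 / 3 ^ k" by (rule cd_close)
    then show "dist (cd (G (dec u'))) (cd (G (dec u))) < \<epsilon>" using k by (simp add: dist_real_def)
  qed
qed

definition sc :: "(nat \<Rightarrow> bool) set \<Rightarrow> nat" where
  "sc Q = (LEAST i. \<exists>y\<in>Q. \<exists>z\<in>Q. y i \<noteq> z i)"
definition child :: "bool \<Rightarrow> (nat \<Rightarrow> bool) set \<Rightarrow> (nat \<Rightarrow> bool) set" where
  "child b Q = {x\<in>Q. x (sc Q) = b}"
primrec node :: "(nat \<Rightarrow> bool) set \<Rightarrow> bool list \<Rightarrow> (nat \<Rightarrow> bool) set" where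
  "node A [] = A"
| "node A (b # w) = child b (node A w)"
primrec pref :: "(nat \<Rightarrow> bool) \<Rightarrow> nat \<Rightarrow> bool list" where
  "pref d 0 = []"
| "pref d (Suc n) = d n # pref d n"

definition clA :: "(nat \<Rightarrow> bool) set \<Rightarrow> bool" where
  "clA A \<longleftrightarrow> (\<forall>x. (\<forall>k. \<exists>y\<in>A. agree k x y) \<longrightarrow> x \<in> A)"
definition pfA :: "(nat \<Rightarrow> bool) set \<Rightarrow> bool" where
  "pfA A \<longleftrightarrow> (\<forall>x\<in>A. \<forall>k. \<exists>y\<in>A. y \<noteq> x \<and> agree k x y)"
definition detd :: "(nat \<Rightarrow> bool) set \<Rightarrow> (nat \<Rightarrow> bool) set \<Rightarrow> bool" where
  "detd A Q \<longleftrightarrow> Q \<subseteq> A \<and> (\<exists>K. \<forall>x\<in>A. \<forall>y\<in>A. agree K x y \<longrightarrow> (x \<in> Q \<longleftrightarrow> y \<in> Q))"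

lemma agree_mono: "agree k x y \<Longrightarrow> j \<le> k \<Longrightarrow> agree j x y"
  by (auto simp: agree_def)

lemma detdD1: "detd A Q \<Longrightarrow> Q \<subseteq> A"
  unfolding detd_def by simp

lemma detdD2: "detd A Q \<Longrightarrow> \<exists>K. \<forall>x\<in>A. \<forall>y\<in>A. agree K x y \<longrightarrow> (x \<in> Q \<longleftrightarrow> y \<in> Q)"
  unfolding detd_def by simp

lemma detdI:
  assumes "Q \<subseteq> A" "\<And>x y. x \<in> A \<Longrightarrow> y \<in> A \<Longrightarrow> agree K x y \<Longrightarrow> (x \<in> Q \<longleftrightarrow> y \<in> Q)"
  shows "detd A Q"
proof -
  have "\<forall>x\<in>A. \<forall>y\<in>A. agree K x y \<longrightarrow> (x \<in> Q \<longleftrightarrow> y \<in> Q)"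
    by (intro ballI impI) (rule assms(2); assumption)
  then have "\<exists>K. \<forall>x\<in>A. \<forall>y\<in>A. agree K x y \<longrightarrow> (x \<in> Q \<longleftrightarrow> y \<in> Q)" by (rule exI)
  then show ?thesis unfolding detd_def using assms(1) by (rule conjI[rotated])
qed

lemma detd_perfect:
  assumes "pfA A" "detd A Q" "x \<in> Q"
  shows "\<exists>y\<in>Q. y \<noteq> x \<and> agree k x y"
proof -
  from detdD2[OF assms(2)] obtain K where K1: "\<forall>x\<in>A. \<forall>y\<in>A. agree K x y \<longrightarrow> (x \<in> Q \<longleftrightarrow> y \<in> Q)"
    by (rule exE)
  have K2: "Q \<subseteq> A" using assms(2) by (rule detdD1)
  have xA: "x \<in> A" using K2 assms(3) by blast
  have "\<exists>y\<in>A. y \<noteq> x \<and> agree (max k K) x y" using assms(1) xA unfolding pfA_def by simp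
  then obtain y where y: "y \<in> A" "y \<noteq> x" "agree (max k K) x y" by blast
  have a1: "agree K x y" using agree_mono[OF y(3), of K] by simp
  have a2: "agree k x y" using agree_mono[OF y(3), of k] by simp
  have "y \<in> Q" using K1[rule_format, OF xA y(1) a1] assms(3) by simp
  then show ?thesis using y(2) a2 by blast
qed

lemma sc_diff:
  assumes "pfA A" "detd A Q" "Q \<noteq> {}"
  shows "\<exists>y\<in>Q. \<exists>z\<in>Q. y (sc Q) \<noteq> z (sc Q)"
proof -
  obtain x where x: "x \<in> Q" using assms(3) by blast
  obtain y where y: "y \<in> Q" "y \<noteq> x" using detd_perfect[OF assms(1,2) x, of 0] by blast
  have "\<exists>i. y i \<noteq> x i" using y(2) by (simp add: fun_eq_iff)
  then obtain i where "y i \<noteq> x i" by (rule exE)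
  then have "\<exists>i. \<exists>y\<in>Q. \<exists>z\<in>Q. y i \<noteq> z i" using x y by blast
  then show ?thesis unfolding sc_def by (rule LeastI_ex)
qed

lemma sc_below:
  assumes "i < sc Q" "y \<in> Q" "z \<in> Q"
  shows "y i = z i"
proof -
  have "\<not> (\<exists>y\<in>Q. \<exists>z\<in>Q. y i \<noteq> z i)" using assms(1) unfolding sc_def by (rule not_less_Least)
  then show ?thesis using assms(2,3) by blast
qed

lemma sc_ge:
  assumes "\<forall>y\<in>Q. \<forall>z\<in>Q. agree K y z" "\<exists>y\<in>Q. \<exists>z\<in>Q. y (sc Q) \<noteq> z (sc Q)"
  shows "K \<le> sc Q"
proof (rule ccontr)
  assume "\<not> K \<le> sc Q"
  then show False using assms by (auto simp: agree_def)
qed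

lemma child_detd:
  assumes "detd A Q"
  shows "detd A (child b Q)"
proof -
  from detdD2[OF assms] obtain K where K1: "\<forall>x\<in>A. \<forall>y\<in>A. agree K x y \<longrightarrow> (x \<in> Q \<longleftrightarrow> y \<in> Q)"
    by (rule exE)
  have K2: "Q \<subseteq> A" using assms by (rule detdD1)
  show ?thesis
  proof (rule detdI[of _ _ "max K (Suc (sc Q))"])
    show "child b Q \<subseteq> A" using K2 unfolding child_def by auto
    fix x y assume xy: "x \<in> A" "y \<in> A" "agree (max K (Suc (sc Q))) x y"
    have ag: "agree K x y" using agree_mono[OF xy(3), of K] by simp
    have sc: "x (sc Q) = y (sc Q)" using xy(3) by (simp add: agree_def)
    have "x \<in> Q \<longleftrightarrow> y \<in> Q" by (rule K1[rule_format, OF xy(1,2) ag])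
    then show "x \<in> child b Q \<longleftrightarrow> y \<in> child b Q" using sc unfolding child_def by simp
  qed
qed

lemma child_ne:
  assumes "pfA A" "detd A Q" "Q \<noteq> {}"
  shows "child b Q \<noteq> {}"
proof -
  obtain y z where yz: "y \<in> Q" "z \<in> Q" "y (sc Q) \<noteq> z (sc Q)" using sc_diff[OF assms] by blast
  show ?thesis
  proof (cases "y (sc Q) = b")
    case True then show ?thesis using yz unfolding child_def by auto
  next
    case False then have "z (sc Q) = b" using yz(3) by auto
    then show ?thesis using yz unfolding child_def by auto
  qed
qed

lemma child_sub: "child b Q \<subseteq> Q" unfolding child_def by auto

lemma node_props:
  assumes "pfA A" "A \<noteq> {}"
  shows "detd A (node A w) \<and> node A w \<noteq> {}"
proof (induction w)
  case Nil
  have "detd A A" by (rule detdI[of _ _ 0]) auto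
  then show ?case using assms by simp
next
  case (Cons b w)
  then show ?case using child_detd child_ne[OF assms(1)] by simp
qed

lemma node_agree:
  assumes "pfA A" "A \<noteq> {}"
  shows "\<forall>y\<in>node A w. \<forall>z\<in>node A w. agree (length w) y z"
proof (induction w)
  case Nil then show ?case by (simp add: agree_def)
next
  case (Cons b w)
  define Q where "Q = node A w"
  have dQ: "detd A Q" "Q \<noteq> {}" using node_props[OF assms] unfolding Q_def by auto
  have IH: "\<forall>y\<in>Q. \<forall>z\<in>Q. agree (length w) y z" using Cons.IH unfolding Q_def .
  have ge: "length w \<le> sc Q" by (rule sc_ge[OF IH sc_diff[OF assms(1) dQ]])
  show ?case
  proof (intro ballI)
    fix y z assume yz: "y \<in> node A (b # w)" "z \<in> node A (b # w)"
    then have yz': "y \<in> Q" "z \<in> Q" "y (sc Q) = b" "z (sc Q) = b" unfolding Q_def by (auto simp: child_def)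
    show "agree (length (b # w)) y z" unfolding agree_def
    proof (intro allI impI)
      fix i assume "i < length (b # w)"
      then have ii: "i < sc Q \<or> i = sc Q" using ge by auto
      show "y i = z i"
      proof (cases "i < sc Q")
        case True then show ?thesis using sc_below yz'(1,2) by blast
      next
        case False then have "i = sc Q" using ii by simp
        then show ?thesis using yz'(3,4) by simp
      qed
    qed
  qed
qed

lemma length_pref [simp]: "length (pref d n) = n"
  by (induction n) auto

lemma node_chain: "m \<le> n \<Longrightarrow> node A (pref d n) \<subseteq> node A (pref d m)"
proof (induction n rule: dec_induct)
  case base then show ?case by simp
next
  case (step n)
  have "node A (pref d (Suc n)) = child (d n) (node A (pref d n))" by simp
  then have "node A (pref d (Suc n)) \<subseteq> node A (pref d n)" using child_sub by simp
  then show ?case using step.IH by (rule subset_trans)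
qed

definition Psi :: "(nat \<Rightarrow> bool) set \<Rightarrow> (nat \<Rightarrow> bool) \<Rightarrow> (nat \<Rightarrow> bool)" where
  "Psi A d = (THE x. \<forall>n. x \<in> node A (pref d n))"

lemma Psi_ex1:
  assumes "clA A" "pfA A" "A \<noteq> {}"
  shows "\<exists>!x. \<forall>n. x \<in> node A (pref d n)"
proof -
 have ex: "\<exists>x. \<forall>n. x \<in> node A (pref d n)"
 proof -
  define xs where "xs = (\<lambda>n. SOME x. x \<in> node A (pref d n))"
  have xs: "xs n \<in> node A (pref d n)" for n
    unfolding xs_def using node_props[OF assms(2,3)] by (simp add: some_in_eq)
  have nA: "node A w \<subseteq> A" for w
  proof -
    have "detd A (node A w)" using node_props[OF assms(2,3)] by simp
    then show ?thesis by (rule detdD1)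
  qed
  define z where "z = (\<lambda>i. xs (Suc i) i)"
  have agz: "agree k z (xs k)" for k
    unfolding agree_def
  proof (intro allI impI)
    fix i assume i: "i < k"
    have "xs k \<in> node A (pref d (Suc i))" using node_chain[of "Suc i" k A d] xs i by auto
    moreover have "xs (Suc i) \<in> node A (pref d (Suc i))" by (rule xs)
    ultimately have "agree (length (pref d (Suc i))) (xs (Suc i)) (xs k)"
      using node_agree[OF assms(2,3), of "pref d (Suc i)"] by blast
    then have "agree (Suc i) (xs (Suc i)) (xs k)" by simp
    then show "z i = xs k i" unfolding z_def agree_def by auto
  qed
  have "\<forall>k. \<exists>y\<in>A. agree k z y"
  proof
    fix k show "\<exists>y\<in>A. agree k z y" using agz[of k] xs[of k] nA[of "pref d k"] by blast
  qed
  then have zA: "z \<in> A" using assms(1) by (simp add: clA_def)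
  have "\<forall>n. z \<in> node A (pref d n)"
  proof
    fix n
    have "detd A (node A (pref d n))" using node_props[OF assms(2,3)] by simp
    from detdD2[OF this] obtain K where K: "\<forall>x\<in>A. \<forall>y\<in>A. agree K x y \<longrightarrow> (x \<in> node A (pref d n) \<longleftrightarrow> y \<in> node A (pref d n))"
      by (rule exE)
    have y: "xs (max n K) \<in> node A (pref d n)" using node_chain[of n "max n K" A d] xs by auto
    have "agree K z (xs (max n K))" using agz[of "max n K"] agree_mono[of "max n K" z "xs (max n K)" K] by simp
    moreover have yA: "xs (max n K) \<in> A" using y nA by blast
    ultimately have "(z \<in> node A (pref d n)) = (xs (max n K) \<in> node A (pref d n))"
      using K[rule_format, OF zA] by simp
    then show "z \<in> node A (pref d n)" using y by simp
  qed
  then show ?thesis by blast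
 qed
 have un: "x = y" if x: "\<forall>n. x \<in> node A (pref d n)" and y: "\<forall>n. y \<in> node A (pref d n)" for x y
  proof (rule ext)
    fix i
    have "agree (length (pref d (Suc i))) x y"
      using node_agree[OF assms(2,3), of "pref d (Suc i)"] x[rule_format, of "Suc i"] y[rule_format, of "Suc i"] by blast
    then have "agree (Suc i) x y" by simp
    then show "x i = y i" by (simp add: agree_def)
  qed
 show ?thesis by (rule ex_ex1I[OF ex un])
qed

lemma Psi_in:
  assumes "clA A" "pfA A" "A \<noteq> {}"
  shows "Psi A d \<in> node A (pref d n)"
proof -
  have "\<forall>n. Psi A d \<in> node A (pref d n)" unfolding Psi_def by (rule theI'[OF Psi_ex1[OF assms]])
  then show ?thesis by (rule spec)
qed

lemma Psi_A:
  assumes "clA A" "pfA A" "A \<noteq> {}"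
  shows "Psi A d \<in> A"
  using Psi_in[OF assms, of d 0] by simp

lemma pref_agree: "agree k d e \<Longrightarrow> pref d k = pref e k"
proof (induction k)
  case 0 then show ?case by simp
next
  case (Suc k)
  then have "agree k d e" "d k = e k" by (auto simp: agree_def)
  then show ?case using Suc.IH by simp
qed

lemma Psi_uc:
  assumes "clA A" "pfA A" "A \<noteq> {}" "agree k d e"
  shows "agree k (Psi A d) (Psi A e)"
proof -
  have "Psi A e \<in> node A (pref d k)" using Psi_in[OF assms(1-3), of e k] pref_agree[OF assms(4)] by simp
  then show ?thesis using node_agree[OF assms(2,3), of "pref d k"] Psi_in[OF assms(1-3), of d k] by auto
qed

primrec pth :: "(nat \<Rightarrow> bool) set \<Rightarrow> (nat \<Rightarrow> bool) \<Rightarrow> nat \<Rightarrow> bool list" where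
  "pth A x 0 = []"
| "pth A x (Suc n) = x (sc (node A (pth A x n))) # pth A x n"

definition Pinv :: "(nat \<Rightarrow> bool) set \<Rightarrow> (nat \<Rightarrow> bool) \<Rightarrow> (nat \<Rightarrow> bool)" where
  "Pinv A x = (\<lambda>n. x (sc (node A (pth A x n))))"

lemma length_pth [simp]: "length (pth A x n) = n"
  by (induction n) auto

lemma pth_in: "x \<in> A \<Longrightarrow> x \<in> node A (pth A x n)"
  by (induction n) (auto simp: child_def)

lemma pref_Pinv: "pref (Pinv A x) n = pth A x n"
  by (induction n) (auto simp: Pinv_def)

lemma Psi_Pinv:
  assumes "clA A" "pfA A" "A \<noteq> {}" "x \<in> A"
  shows "Psi A (Pinv A x) = x"
proof -
  have P: "\<forall>n. x \<in> node A (pref (Pinv A x) n)"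
  proof
    fix n
    have "x \<in> node A (pth A x n)" by (rule pth_in[OF assms(4)])
    then show "x \<in> node A (pref (Pinv A x) n)" by (simp only: pref_Pinv)
  qed
  have Q: "\<forall>n. Psi A (Pinv A x) \<in> node A (pref (Pinv A x) n)"
    using Psi_in[OF assms(1-3)] by blast
  obtain y where y: "\<forall>n. y \<in> node A (pref (Pinv A x) n)"
     "\<And>z. \<forall>n. z \<in> node A (pref (Pinv A x) n) \<Longrightarrow> z = y"
    using Psi_ex1[OF assms(1-3), of "Pinv A x"] by (elim ex1E) blast
  show ?thesis using y(2)[OF P] y(2)[OF Q] by simp
qed

lemma Pinv_Psi:
  assumes "clA A" "pfA A" "A \<noteq> {}"
  shows "Pinv A (Psi A d) = d"
proof -
  have p: "pth A (Psi A d) n = pref d n" for n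
  proof (induction n)
    case 0 then show ?case by simp
  next
    case (Suc n)
    have "Psi A d \<in> node A (pref d (Suc n))" by (rule Psi_in[OF assms])
    then have "Psi A d (sc (node A (pref d n))) = d n" by (simp add: child_def)
    then show ?case using Suc by simp
  qed
  show ?thesis
  proof
    fix n
    have "Psi A d \<in> node A (pref d (Suc n))" by (rule Psi_in[OF assms])
    then show "Pinv A (Psi A d) n = d n" using p[of n] by (simp add: Pinv_def child_def)
  qed
qed

lemma Pinv_uc: "\<exists>l. \<forall>x y. agree l x y \<longrightarrow> agree k (Pinv A x) (Pinv A y)"
proof -
  define S where "S = {w :: bool list. length w < k}"
  have "S \<subseteq> {xs. set xs \<subseteq> (UNIV :: bool set) \<and> length xs \<le> k}" unfolding S_def by auto
  moreover have "finite {xs. set xs \<subseteq> (UNIV :: bool set) \<and> length xs \<le> k}"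
    by (rule finite_lists_length_le) simp
  ultimately have fS: "finite S" by (rule finite_subset)
  define l where "l = Suc (Max (insert 0 ((\<lambda>w. sc (node A w)) ` S)))"
  have sl: "sc (node A w) < l" if "length w < k" for w
  proof -
    have "sc (node A w) \<in> insert 0 ((\<lambda>w. sc (node A w)) ` S)" using that unfolding S_def by auto
    moreover have "finite (insert 0 ((\<lambda>w. sc (node A w)) ` S))" using fS by simp
    ultimately have "sc (node A w) \<le> Max (insert 0 ((\<lambda>w. sc (node A w)) ` S))" by (intro Max_ge)
    then show ?thesis unfolding l_def by simp
  qed
  show ?thesis
  proof (intro exI[of _ l] allI impI)
    fix x y assume ag: "agree l x y"
    have pe: "n \<le> k \<Longrightarrow> pth A x n = pth A y n" for n
    proof (induction n)
      case 0 then show ?case by simp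
    next
      case (Suc n)
      then have e: "pth A x n = pth A y n" by simp
      have "sc (node A (pth A x n)) < l" using sl Suc.prems by simp
      then have "x (sc (node A (pth A x n))) = y (sc (node A (pth A x n)))" using ag by (simp add: agree_def)
      then show ?case using e by simp
    qed
    show "agree k (Pinv A x) (Pinv A y)" unfolding agree_def Pinv_def
    proof (intro allI impI)
      fix i assume i: "i < k"
      then have e: "pth A x i = pth A y i" using pe by simp
      have "sc (node A (pth A x i)) < l" using sl i by simp
      then show "x (sc (node A (pth A x i))) = y (sc (node A (pth A y i)))" using ag e by (simp add: agree_def)
    qed
  qed
qed

definition zi :: "nat \<Rightarrow> int" where
  "zi n = (if even n then int (n div 2) else - int (n div 2) - 1)"
definition nz :: "int \<Rightarrow> nat" where
  "nz i = (if i \<ge> 0 then 2 * nat i else 2 * nat (- i) - 1)"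

lemma zi_nz [simp]: "zi (nz i) = i"
proof (cases "i \<ge> 0")
  case True then show ?thesis by (simp add: zi_def nz_def)
next
  case False
  then have "nz i = 2 * nat (- i) - 1" by (simp add: nz_def)
  moreover have "odd (2 * nat (- i) - 1)" using False by simp
  moreover have "(2 * nat (- i) - 1) div 2 = nat (- i) - 1" using False by simp
  ultimately show ?thesis using False by (simp add: zi_def)
qed

lemma nz_zi [simp]: "nz (zi n) = n"
proof (cases "even n")
  case True then show ?thesis by (auto simp: zi_def nz_def)
next
  case False
  then have "zi n = - int (n div 2) - 1" by (simp add: zi_def)
  moreover have "n = 2 * (n div 2) + 1" using False by simp
  ultimately show ?thesis by (simp add: nz_def)
qed

lemma nz_bound: "nz i \<le> 2 * nat \<bar>i\<bar>"
  by (simp add: nz_def)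

lemma zi_bound: "\<bar>zi n\<bar> \<le> int n"
proof (cases "even n")
  case True then show ?thesis by (simp add: zi_def)
next
  case False
  then obtain q where q: "n = 2 * q + 1" by (auto elim: oddE)
  then show ?thesis by (simp add: zi_def)
qed

lemma nat_abs_add: "nat \<bar>a + b\<bar> \<le> nat \<bar>a\<bar> + nat \<bar>b\<bar>"
proof -
  have "\<bar>a + b\<bar> \<le> \<bar>a\<bar> + \<bar>b\<bar>" by (rule abs_triangle_ineq)
  then have "nat \<bar>a + b\<bar> \<le> nat (\<bar>a\<bar> + \<bar>b\<bar>)" by (rule nat_mono)
  also have "\<dots> = nat \<bar>a\<bar> + nat \<bar>b\<bar>" by (simp add: nat_add_distrib)
  finally show ?thesis .
qed

definition AA :: "(nat \<Rightarrow> bool) set" where "AA = {y. (\<lambda>i. y (nz i)) \<in> XX}"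

definition shk :: "int \<Rightarrow> (nat \<Rightarrow> bool) \<Rightarrow> (nat \<Rightarrow> bool)" where
  "shk s y = (\<lambda>n. y (nz (zi n + s)))"

lemma fromX: "x \<in> XX \<Longrightarrow> (\<lambda>n. x (zi n)) \<in> AA"
  by (simp add: AA_def)

lemma a0_A: "(\<lambda>_. False) \<in> AA"
  using zero_in by (simp add: AA_def)

lemma AA_ne: "AA \<noteq> {}" using a0_A by blast

lemma clA_AA: "clA AA"
  unfolding clA_def
proof (intro allI impI)
  fix b assume h: "\<forall>k. \<exists>y\<in>AA. agree k b y"
  have "(\<lambda>i. b (nz i)) \<in> XX" unfolding XX_def
  proof (intro CollectI allI)
    fix a :: int and L :: nat
    define K where "K = 2 * (nat \<bar>a\<bar> + L) + 1"
    obtain y where y: "y \<in> AA" "agree K b y" using h by blast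
    have "wok (\<lambda>i. y (nz i)) a L" using y(1) by (simp add: AA_def XX_def)
    then obtain n q where nq: "q + L \<le> bh n" "\<forall>j<L. y (nz (a + int j)) = B n ! (q + j)"
      unfolding wok_def by blast
    have "\<forall>j<L. b (nz (a + int j)) = B n ! (q + j)"
    proof (intro allI impI)
      fix j assume j: "j < L"
      have "nz (a + int j) \<le> 2 * nat \<bar>a + int j\<bar>" by (rule nz_bound)
      also have "\<dots> < K" unfolding K_def using j nat_abs_add[of a "int j"] by simp
      finally have "b (nz (a + int j)) = y (nz (a + int j))" using y(2) by (simp add: agree_def)
      then show "b (nz (a + int j)) = B n ! (q + j)" using nq(2) j by simp
    qed
    then show "wok (\<lambda>i. b (nz i)) a L" unfolding wok_def using nq(1) by blast
  qed
  then show "b \<in> AA" by (simp add: AA_def)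
qed

lemma pfA_AA: "pfA AA"
  unfolding pfA_def
proof (intro ballI allI)
  fix y k assume y: "y \<in> AA"
  define x where "x = (\<lambda>i. y (nz i))"
  have xX: "x \<in> XX" using y unfolding x_def AA_def by simp
  obtain x' where x': "x' \<in> XX" "x' \<noteq> x" "\<forall>i. \<bar>i\<bar> \<le> int k \<longrightarrow> x' i = x i"
    using perfect[OF xX, of k] by blast
  define y' where "y' = (\<lambda>n. x' (zi n))"
  have "y' \<in> AA" unfolding y'_def by (rule fromX[OF x'(1)])
  moreover have "y' \<noteq> y"
  proof
    assume "y' = y"
    then have "x' i = x i" for i
    proof -
      have "x' i = y' (nz i)" unfolding y'_def by simp
      also have "\<dots> = y (nz i)" using \<open>y' = y\<close> by simp
      finally show ?thesis unfolding x_def .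
    qed
    then show False using x'(2) by auto
  qed
  moreover have "agree k y y'" unfolding agree_def
  proof (intro allI impI)
    fix n assume n: "n < k"
    have "\<bar>zi n\<bar> \<le> int k" using zi_bound[of n] n by linarith
    then have "x' (zi n) = x (zi n)" using x'(3) by blast
    then show "y n = y' n" unfolding y'_def x_def by simp
  qed
  ultimately show "\<exists>y'\<in>AA. y' \<noteq> y \<and> agree k y y'" by blast
qed

lemma shk_A: "y \<in> AA \<Longrightarrow> shk s y \<in> AA"
proof -
  assume y: "y \<in> AA"
  have "(\<lambda>i. y (nz (i + s))) \<in> XX" using shift_in[of "\<lambda>i. y (nz i)" s] y by (simp add: AA_def)
  then show ?thesis by (simp add: AA_def shk_def)
qed

lemma shk_add: "shk a (shk b y) = shk (a + b) y"
  by (simp add: shk_def add.assoc)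

lemma shk_0: "shk 0 y = y"
  by (simp add: shk_def)

lemma shk_uc: "\<exists>l. \<forall>d e. agree l d e \<longrightarrow> agree k (shk s d) (shk s e)"
proof (intro exI[of _ "2 * (k + nat \<bar>s\<bar>) + 1"] allI impI)
  fix d e assume ag: "agree (2 * (k + nat \<bar>s\<bar>) + 1) d e"
  show "agree k (shk s d) (shk s e)" unfolding agree_def shk_def
  proof (intro allI impI)
    fix n assume n: "n < k"
    have "nz (zi n + s) \<le> 2 * nat \<bar>zi n + s\<bar>" by (rule nz_bound)
    also have "\<dots> < 2 * (k + nat \<bar>s\<bar>) + 1"
    proof -
      have "nat \<bar>zi n\<bar> \<le> n" using zi_bound[of n] by simp
      then show ?thesis using nat_abs_add[of "zi n" s] n by simp
    qed
    finally show "d (nz (zi n + s)) = e (nz (zi n + s))" using ag by (simp add: agree_def)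
  qed
qed

abbreviation Ps where "Ps \<equiv> Psi AA"
abbreviation Pi where "Pi \<equiv> Pinv AA"

lemma Ps_A: "Ps d \<in> AA" by (rule Psi_A[OF clA_AA pfA_AA AA_ne])
lemma Ps_Pi: "y \<in> AA \<Longrightarrow> Ps (Pi y) = y" by (rule Psi_Pinv[OF clA_AA pfA_AA AA_ne])
lemma Pi_Ps [simp]: "Pi (Ps d) = d" by (rule Pinv_Psi[OF clA_AA pfA_AA AA_ne])

definition GG :: "int \<Rightarrow> (nat \<Rightarrow> bool) \<Rightarrow> (nat \<Rightarrow> bool)" where
  "GG s d = Pi (shk s (Ps d))"

lemma GG_uc: "ucont (GG s)"
  unfolding ucont_def
proof
  fix k
  obtain l1 where l1: "\<forall>x y. agree l1 x y \<longrightarrow> agree k (Pi x) (Pi y)" using Pinv_uc by blast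
  obtain l2 where l2: "\<forall>d e. agree l2 d e \<longrightarrow> agree l1 (shk s d) (shk s e)" using shk_uc by blast
  show "\<exists>l. \<forall>d e. agree l d e \<longrightarrow> agree k (GG s d) (GG s e)"
  proof (intro exI[of _ l2] allI impI)
    fix d e assume "agree l2 d e"
    then have "agree l2 (Ps d) (Ps e)" by (rule Psi_uc[OF clA_AA pfA_AA AA_ne])
    then have "agree l1 (shk s (Ps d)) (shk s (Ps e))" using l2 by blast
    then show "agree k (GG s d) (GG s e)" unfolding GG_def using l1 by blast
  qed
qed

lemma GG_comp: "GG a (GG b d) = GG (a + b) d"
proof -
  have "shk b (Ps d) \<in> AA" by (rule shk_A[OF Ps_A])
  then have "Ps (GG b d) = shk b (Ps d)" unfolding GG_def by (rule Ps_Pi)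
  then show ?thesis unfolding GG_def by (simp add: shk_add)
qed

lemma GG_0: "GG 0 d = d"
  unfolding GG_def by (simp add: shk_0)

definition TT :: "real \<Rightarrow> real" where "TT u = cd (GG 1 (dec u))"
definition SS :: "real \<Rightarrow> real" where "SS u = cd (GG (-1) (dec u))"

lemma cd_in: "cd d \<in> cantor_set" by (simp add: cantor_eq)

lemma TT_iter: "u \<in> cantor_set \<Longrightarrow> (TT ^^ j) u = cd (GG (int j) (dec u))"
proof (induction j)
  case 0 then show ?case by (simp add: GG_0 cd_dec)
next
  case (Suc j)
  have "(TT ^^ Suc j) u = TT (cd (GG (int j) (dec u)))" using Suc by simp
  also have "\<dots> = cd (GG 1 (GG (int j) (dec u)))" by (simp add: TT_def)
  also have "\<dots> = cd (GG (int (Suc j)) (dec u))" by (simp add: GG_comp add.commute)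
  finally show ?case .
qed

lemma SS_iter: "u \<in> cantor_set \<Longrightarrow> (SS ^^ j) u = cd (GG (- int j) (dec u))"
proof (induction j)
  case 0 then show ?case by (simp add: GG_0 cd_dec)
next
  case (Suc j)
  have "(SS ^^ Suc j) u = SS (cd (GG (- int j) (dec u)))" using Suc by simp
  also have "\<dots> = cd (GG (-1) (GG (- int j) (dec u)))" by (simp add: SS_def)
  also have "\<dots> = cd (GG (- int (Suc j)) (dec u))" by (simp add: GG_comp add.commute)
  finally show ?case .
qed

lemma int_iter_eq: "u \<in> cantor_set \<Longrightarrow> int_iter TT SS k u = cd (GG k (dec u))"
proof (cases "k \<ge> 0")
  case True
  assume u: "u \<in> cantor_set"
  have "int_iter TT SS k u = (TT ^^ nat k) u" using True by (simp add: int_iter_def)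
  also have "\<dots> = cd (GG (int (nat k)) (dec u))" by (rule TT_iter[OF u])
  finally show ?thesis using True by simp
next
  case False
  assume u: "u \<in> cantor_set"
  have "int_iter TT SS k u = (SS ^^ nat (- k)) u" using False by (simp add: int_iter_def)
  also have "\<dots> = cd (GG (- int (nat (- k))) (dec u))" by (rule SS_iter[OF u])
  finally show ?thesis using False by simp
qed

lemma homeo: "homeomorphism cantor_set cantor_set TT SS"
proof -
  have st: "SS (TT u) = u" if "u \<in> cantor_set" for u
    using that by (simp add: SS_def TT_def GG_comp GG_0 cd_dec)
  have ts: "TT (SS u) = u" if "u \<in> cantor_set" for u
    using that by (simp add: SS_def TT_def GG_comp GG_0 cd_dec)
  have i1: "TT ` cantor_set = cantor_set"
  proof
    show "TT ` cantor_set \<subseteq> cantor_set" by (auto simp: TT_def cd_in)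
    show "cantor_set \<subseteq> TT ` cantor_set"
    proof
      fix v assume "v \<in> cantor_set"
      then have "v = TT (SS v)" "SS v \<in> cantor_set" using ts by (auto simp: SS_def cd_in)
      then show "v \<in> TT ` cantor_set" by blast
    qed
  qed
  have i2: "SS ` cantor_set = cantor_set"
  proof
    show "SS ` cantor_set \<subseteq> cantor_set" by (auto simp: SS_def cd_in)
    show "cantor_set \<subseteq> SS ` cantor_set"
    proof
      fix v assume "v \<in> cantor_set"
      then have "v = SS (TT v)" "TT v \<in> cantor_set" using st by (auto simp: TT_def cd_in)
      then show "v \<in> SS ` cantor_set" by blast
    qed
  qed
  have c1: "continuous_on cantor_set TT"
    using cont_conj[OF GG_uc[of 1]] unfolding TT_def by simp
  have c2: "continuous_on cantor_set SS"
    using cont_conj[OF GG_uc[of "-1"]] unfolding SS_def by simp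
  show ?thesis unfolding homeomorphism_def using st ts i1 i2 c1 c2 by blast
qed

definition u0 :: real where "u0 = cd (Pi (\<lambda>_. False))"

lemma shk_a0: "shk s (\<lambda>_. False) = (\<lambda>_. False)"
  by (simp add: shk_def)

lemma u0_in: "u0 \<in> cantor_set" unfolding u0_def by (rule cd_in)

lemma TT_u0: "TT u0 = u0"
proof -
  have "Ps (Pi (\<lambda>_. False)) = (\<lambda>_. False)" by (rule Ps_Pi[OF a0_A])
  then show ?thesis unfolding TT_def u0_def GG_def by (simp add: shk_a0)
qed

lemma Ps_ne: "u \<in> cantor_set \<Longrightarrow> u \<noteq> u0 \<Longrightarrow> Ps (dec u) \<noteq> (\<lambda>_. False)"
proof
  assume u: "u \<in> cantor_set" "u \<noteq> u0" and h: "Ps (dec u) = (\<lambda>_. False)"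
  have "dec u = Pi (Ps (dec u))" by simp
  also have "\<dots> = Pi (\<lambda>_. False)" using h by simp
  finally have "cd (dec u) = u0" unfolding u0_def by simp
  then show False using u cd_dec by simp
qed

lemma back_X: "y \<in> AA \<Longrightarrow> (\<lambda>i. y (nz i)) = (\<lambda>_. False) \<Longrightarrow> y = (\<lambda>_. False)"
proof
  fix n assume "(\<lambda>i. y (nz i)) = (\<lambda>_. False)"
  then have "(\<lambda>i. y (nz i)) (zi n) = False" by (rule fun_cong[THEN trans]) simp
  then show "y n = False" by simp
qed

lemma TT_fix: "u \<in> cantor_set \<Longrightarrow> TT u = u \<Longrightarrow> u = u0"
proof (rule ccontr)
  assume u: "u \<in> cantor_set" "TT u = u" "u \<noteq> u0"
  define y where "y = Ps (dec u)"
  have yA: "y \<in> AA" unfolding y_def by (rule Ps_A)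
  have "cd (Pi (shk 1 y)) = cd (dec u)" using u(2) cd_dec[OF u(1)] unfolding TT_def GG_def y_def by simp
  then have "Pi (shk 1 y) = dec u" using cd_inj by (simp add: inj_eq)
  then have "Ps (Pi (shk 1 y)) = y" unfolding y_def by simp
  then have sy: "shk 1 y = y" using Ps_Pi[OF shk_A[OF yA]] by simp
  define x where "x = (\<lambda>i. y (nz i))"
  have xX: "x \<in> XX" using yA unfolding x_def AA_def by simp
  have "\<forall>i. x (i + 1) = x i"
  proof
    fix i
    have "x (i + 1) = shk 1 y (nz i)" unfolding x_def shk_def by simp
    then show "x (i + 1) = x i" using sy unfolding x_def by simp
  qed
  then have "x = (\<lambda>_. False)" by (rule fixed[OF xX])
  then have "y = (\<lambda>_. False)" using back_X[OF yA] unfolding x_def by simp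
  then show False using Ps_ne[OF u(1) u(3)] unfolding y_def by simp
qed

lemma dense_orbit:
  assumes u: "u \<in> cantor_set" "u \<noteq> u0" and m: "1 \<le> m" and v: "v \<in> cantor_set"
  shows "v \<in> closure {int_iter TT SS (int m * k) u | k::int. True}"
  unfolding closure_approachable
proof (intro allI impI)
  fix \<epsilon> :: real assume e: "0 < \<epsilon>"
  obtain K where K: "1 / 3 ^ K < \<epsilon>" using small_pow[OF e] by blast
  obtain l where l: "\<forall>x y. agree l x y \<longrightarrow> agree K (Pi x) (Pi y)" using Pinv_uc by blast
  define y0 where "y0 = Ps (dec u)"
  define e0 where "e0 = Ps (dec v)"
  have y0A: "y0 \<in> AA" unfolding y0_def by (rule Ps_A)
  have e0A: "e0 \<in> AA" unfolding e0_def by (rule Ps_A)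
  define x where "x = (\<lambda>i. y0 (nz i))"
  define z where "z = (\<lambda>i. e0 (nz i))"
  have xX: "x \<in> XX" using y0A unfolding x_def AA_def by simp
  have zX: "z \<in> XX" using e0A unfolding z_def AA_def by simp
  have xnz: "x \<noteq> (\<lambda>_. False)"
  proof
    assume "x = (\<lambda>_. False)"
    then have "y0 = (\<lambda>_. False)" using back_X[OF y0A] unfolding x_def by simp
    then show False using Ps_ne[OF u] unfolding y0_def by simp
  qed
  obtain k where k: "\<forall>i. \<bar>i\<bar> \<le> int l \<longrightarrow> x (i + int m * k) = z i"
    using density[OF xX xnz zX m, of l] by blast
  have ag: "agree l (shk (int m * k) y0) e0" unfolding agree_def
  proof (intro allI impI)
    fix n assume n: "n < l"
    have "\<bar>zi n\<bar> \<le> int l" using zi_bound[of n] n by linarith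
    then have "x (zi n + int m * k) = z (zi n)" using k by blast
    then show "shk (int m * k) y0 n = e0 n" unfolding shk_def x_def z_def by simp
  qed
  then have "agree K (Pi (shk (int m * k) y0)) (Pi e0)" using l by blast
  then have "\<bar>cd (Pi (shk (int m * k) y0)) - cd (Pi e0)\<bar> \<le> 1 / 3 ^ K" by (rule cd_close)
  moreover have "cd (Pi e0) = v" unfolding e0_def using cd_dec[OF v] by simp
  moreover have "int_iter TT SS (int m * k) u = cd (Pi (shk (int m * k) y0))"
    using int_iter_eq[OF u(1)] unfolding GG_def y0_def by simp
  ultimately have "dist (int_iter TT SS (int m * k) u) v < \<epsilon>" using K by (simp add: dist_real_def)
  then show "\<exists>y\<in>{int_iter TT SS (int m * k) u | k::int. True}. dist y v < \<epsilon>" by blast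
qed

theorem theorem6p1:
  shows "\<exists>T S. homeomorphism cantor_set cantor_set T S \<and>
           (\<exists>x0\<in>cantor_set. T x0 = x0 \<and> (\<forall>x\<in>cantor_set. T x = x \<longrightarrow> x = x0) \<and>
              (\<forall>x\<in>cantor_set - {x0}. \<forall>m::nat. m \<ge> 1 \<longrightarrow>
                  cantor_set \<subseteq> closure {int_iter T S (int m * k) x | k::int. True}))"
proof -
  have P: "TT u0 = u0 \<and> (\<forall>x\<in>cantor_set. TT x = x \<longrightarrow> x = u0) \<and>
              (\<forall>x\<in>cantor_set - {u0}. \<forall>m::nat. m \<ge> 1 \<longrightarrow>
                  cantor_set \<subseteq> closure {int_iter TT SS (int m * k) x | k::int. True})"
  proof (intro conjI)
    show "TT u0 = u0" by (rule TT_u0)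
    show "\<forall>x\<in>cantor_set. TT x = x \<longrightarrow> x = u0" using TT_fix by blast
    show "\<forall>x\<in>cantor_set - {u0}. \<forall>m::nat. m \<ge> 1 \<longrightarrow>
          cantor_set \<subseteq> closure {int_iter TT SS (int m * k) x | k::int. True}"
    proof (intro ballI allI impI subsetI)
      fix x and m :: nat and v assume "x \<in> cantor_set - {u0}" "1 \<le> m" "v \<in> cantor_set"
      then show "v \<in> closure {int_iter TT SS (int m * k) x | k::int. True}"
        using dense_orbit by blast
    qed
  qed
  have "\<exists>x0\<in>cantor_set. TT x0 = x0 \<and> (\<forall>x\<in>cantor_set. TT x = x \<longrightarrow> x = x0) \<and>
              (\<forall>x\<in>cantor_set - {x0}. \<forall>m::nat. m \<ge> 1 \<longrightarrow>
                  cantor_set \<subseteq> closure {int_iter TT SS (int m * k) x | k::int. True})"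
    by (rule bexI[where x=u0]) (rule P, rule u0_in)
  then have "homeomorphism cantor_set cantor_set TT SS \<and> (\<exists>x0\<in>cantor_set. TT x0 = x0 \<and> (\<forall>x\<in>cantor_set. TT x = x \<longrightarrow> x = x0) \<and>
              (\<forall>x\<in>cantor_set - {x0}. \<forall>m::nat. m \<ge> 1 \<longrightarrow>
                  cantor_set \<subseteq> closure {int_iter TT SS (int m * k) x | k::int. True}))"
    using homeo by (rule conjI[rotated])
  then show ?thesis by (intro exI)
qed

end
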